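(* For every (closed) term $P$ and every event $e \in \Sigma$, $$[\![P]\!](e) = \bigcup_{Q \,:\, P \overset{e}{\Rightarrow} Q} [\![Q]\!].$$
   Context: Fix a set $\Sigma$ of events. Terms: $P, Q ::= \mathit{STOP} \mid \mathit{FAIL} \mid ?x{:}E \rightarrow P \mid P \,\Box\, Q \mid P \parallel_E Q$, where an event set $E$ is $f(y_1,\dots,y_n)$ with $f : \Sigma^n \to 2^\Sigma$ computable and each $y_i$ an event variable or event; $x$ is bound in $P$ in $?x{:}E\rightarrow P$. Terms are closed, so each $E$ denotes a subset of $\Sigma$; $[e/x]P$ is substitution of event $e$ for $x$. Trace semantics. A trace set is a prefix-closed subset of $\Sigma^*$ (possibly empty); $\varepsilon$ is the empty trace. For a trace set $T$: $eT := \{\varepsilon\} \cup \{et \mid t \in T\}$, $T(e) := \{t \mid et \in T\}$. For $E \subseteq \Sigma$, $\parallel_E$ on trace sets is the unique function with $\varnothing \parallel_E T = T \parallel_E \varnothing = \varnothing$ and, for nonempty $T_1, T_2$, $T_1 \parallel_E T_2 = \bigcup_{e \in E} e(T_1(e) \parallel_E T_2(e)) \cup \bigcup_{e \in \Sigma\setminus E}( e(T_1(e) \parallel_E T_2) \cup e(T_1 \parallel_E T_2(e)))$. The semantics: $[\![\mathit{STOP}]\!] = \{\varepsilon\}$, $[\![\mathit{FAIL}]\!] = \varnothing$, $[\![?x{:}E \rightarrow P]\!] = \{\varepsilon\} \cup \bigcup_{e \in E} e[\![ [e/x]P ]\!]$, $[\![P \Box Q]\!] = [\![P]\!] \cup [\![Q]\!]$,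 $[\![P \parallel_E Q]\!] = [\![P]\!] \parallel_E [\![Q]\!]$. Operational semantics. Actions $a ::= e \mid \tau$, $\tau \notin \Sigma$. Doomed terms: $D ::= \mathit{FAIL} \mid D \Box D \mid D \parallel_E P \mid P \parallel_E D$; viable terms $\hat P, \hat Q$ are non-doomed terms. The internal transition relation $\xrightarrow{a}$ is the least relation closed under: (1) $e \in E \Rightarrow (?x{:}E \rightarrow P) \xrightarrow{e} [e/x]P$; (2) $P \xrightarrow{\tau} P' \Rightarrow P \Box Q \xrightarrow{\tau} P' \Box Q$; (3) $Q \xrightarrow{\tau} Q' \Rightarrow P \Box Q \xrightarrow{\tau} P \Box Q'$; (4) $P \xrightarrow{e} P' \Rightarrow P \Box Q \xrightarrow{e} P'$; (5) $Q \xrightarrow{e} Q' \Rightarrow P \Box Q \xrightarrow{e} Q'$; (6) $P \xrightarrow{a} P'$, $a \notin E$, $\hat Q$ viable $\Rightarrow P \parallel_E \hat Q \xrightarrow{a} P' \parallel_E \hat Q$; (7) $Q \xrightarrow{a} Q'$, $a \notin E$, $\hat P$ viable $\Rightarrow \hat P \parallel_E Q \xrightarrow{a} \hat P \parallel_E Q'$; (8) $\hat P, \hat Q$ viable, $\hat P \xrightarrow{e} P'$, $\hat Q \xrightarrow{e} Q'$, $e \in E$ $\Rightarrow \hat P \parallel_E \hat Q \xrightarrow{e} P' \parallel_E Q'$; (9) $D_1, D_2$ doomed, $D_1 \xrightarrow{\tau} P_1 \Rightarrow D_1 \parallel_E D_2 \xrightarrow{\tau} P_1 \parallel_E D_2$;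 (10) $D_1, D_2$ doomed, $D_2 \xrightarrow{\tau} P_2 \Rightarrow D_1 \parallel_E D_2 \xrightarrow{\tau} D_1 \parallel_E P_2$; (11) $\mathit{FAIL} \Box \mathit{FAIL} \xrightarrow{\tau} \mathit{FAIL}$; (12) $\mathit{FAIL} \parallel_E P \xrightarrow{\tau} \mathit{FAIL}$; (13) $P \parallel_E \mathit{FAIL} \xrightarrow{\tau} \mathit{FAIL}$. For $s \in \Sigma^*$, the visible transition $P \overset{s}{\Rightarrow} Q$ holds iff there is a finite sequence (possibly of length zero) of internal transitions $P = P_0 \xrightarrow{a_1} P_1 \cdots \xrightarrow{a_n} P_n = Q$ such that deleting all $\tau$'s from $a_1 \cdots a_n$ yields $s$; in particular $P \overset{e}{\Rightarrow} Q$ means such a sequence whose only non-$\tau$ label is a single occurrence of $e$. *)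

theory Defs
  imports Main
begin

(* Sigma is the whole (nonempty) event type 'e; 'v is the type of event variables. *)

datatype ('e,'v) atom = Var 'v | Ev 'e

datatype ('e,'v) evset = EvSet "'e list \<Rightarrow> 'e set" "('e,'v) atom list"

datatype ('e,'v) proc =
    STOP
  | FAIL
  | Prefix 'v "('e,'v) evset" "('e,'v) proc"        (* ?x:E -> P, x bound in P *)
  | Ext "('e,'v) proc" "('e,'v) proc"
  | Par "('e,'v) proc" "('e,'v) evset" "('e,'v) proc"

fun fv_atom :: "('e,'v) atom \<Rightarrow> 'v set" where
  "fv_atom (Var x) = {x}"
| "fv_atom (Ev e) = {}"

fun fv_evset :: "('e,'v) evset \<Rightarrow> 'v set" where
  "fv_evset (EvSet f ys) = (\<Union>y\<in>set ys. fv_atom y)"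

primrec fv :: "('e,'v) proc \<Rightarrow> 'v set" where
  "fv STOP = {}"
| "fv FAIL = {}"
| "fv (Prefix x E P) = fv_evset E \<union> (fv P - {x})"
| "fv (Ext P Q) = fv P \<union> fv Q"
| "fv (Par P E Q) = fv P \<union> fv_evset E \<union> fv Q"

definition closed :: "('e,'v) proc \<Rightarrow> bool" where
  "closed P \<longleftrightarrow> fv P = {}"

(* denotation of an event set (meaningful for closed event sets) *)
fun atom_val :: "('e,'v) atom \<Rightarrow> 'e" where
  "atom_val (Ev e) = e"
| "atom_val (Var x) = undefined"

fun den :: "('e,'v) evset \<Rightarrow> 'e set" where
  "den (EvSet f ys) = f (map atom_val ys)"

fun subst_atom :: "'v \<Rightarrow> 'e \<Rightarrow> ('e,'v) atom \<Rightarrow> ('e,'v) atom" where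
  "subst_atom x e (Var y) = (if y = x then Ev e else Var y)"
| "subst_atom x e (Ev d) = Ev d"

fun subst_evset :: "'v \<Rightarrow> 'e \<Rightarrow> ('e,'v) evset \<Rightarrow> ('e,'v) evset" where
  "subst_evset x e (EvSet f ys) = EvSet f (map (subst_atom x e) ys)"

primrec subst :: "'v \<Rightarrow> 'e \<Rightarrow> ('e,'v) proc \<Rightarrow> ('e,'v) proc" where
  "subst x e STOP = STOP"
| "subst x e FAIL = FAIL"
| "subst x e (Prefix y E P) =
     Prefix y (subst_evset x e E) (if y = x then P else subst x e P)"
| "subst x e (Ext P Q) = Ext (subst x e P) (subst x e Q)"
| "subst x e (Par P E Q) = Par (subst x e P) (subst_evset x e E) (subst x e Q)"

lemma size_subst_atom[simp]: "size (subst_atom x e a) = size a"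
  by (cases a) auto

lemma size_subst_evset[simp]: "size (subst_evset x e E) = size E"
  by (cases E) (simp add: size_list_conv_sum_list comp_def)

lemma size_subst[simp]: "size (subst x e P) = size P"
  by (induction P) auto

definition tprefix :: "'e \<Rightarrow> 'e list set \<Rightarrow> 'e list set" where
  "tprefix e T = {[]} \<union> {e # t | t. t \<in> T}"

definition after :: "'e list set \<Rightarrow> 'e \<Rightarrow> 'e list set" where
  "after T e = {t. e # t \<in> T}"

(* parallel composition of trace sets: the unique function satisfying the
   defining equations, given here by recursion on the length of the trace
   (see lemma tpar_eq below). Sigma = UNIV :: 'e set. *)
fun tpar_mem :: "'e set \<Rightarrow> 'e list set \<Rightarrow> 'e list set \<Rightarrow> 'e list \<Rightarrow> bool" where
  "tpar_mem E T1 T2 [] = (T1 \<noteq> {} \<and> T2 \<noteq> {})"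
| "tpar_mem E T1 T2 (e # t) = (T1 \<noteq> {} \<and> T2 \<noteq> {} \<and>
     (if e \<in> E then tpar_mem E (after T1 e) (after T2 e) t
      else tpar_mem E (after T1 e) T2 t \<or> tpar_mem E T1 (after T2 e) t))"

definition tpar :: "'e set \<Rightarrow> 'e list set \<Rightarrow> 'e list set \<Rightarrow> 'e list set" where
  "tpar E T1 T2 = {t. tpar_mem E T1 T2 t}"

lemma tpar_empty: "tpar E {} T = {}" "tpar E T {} = {}"
  by (auto simp: tpar_def elim: tpar_mem.elims)

lemma tpar_eq:
  assumes "T1 \<noteq> {}" "T2 \<noteq> {}"
  shows "tpar E T1 T2 =
    (\<Union>e\<in>E. tprefix e (tpar E (after T1 e) (after T2 e))) \<union>
    (\<Union>e\<in>UNIV - E. tprefix e (tpar E (after T1 e) T2) \<union> tprefix e (tpar E T1 (after T2 e)))"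
proof (rule set_eqI)
  fix t show "t \<in> tpar E T1 T2 \<longleftrightarrow> t \<in> (\<Union>e\<in>E. tprefix e (tpar E (after T1 e) (after T2 e))) \<union>
    (\<Union>e\<in>UNIV - E. tprefix e (tpar E (after T1 e) T2) \<union> tprefix e (tpar E T1 (after T2 e)))"
  proof (cases t)
    case Nil
    have "E \<noteq> {} \<or> UNIV - E \<noteq> {}" by auto
    then show ?thesis using Nil assms by (auto simp: tpar_def tprefix_def)
  next
    case (Cons e s)
    then show ?thesis using assms by (auto simp: tpar_def tprefix_def split: if_splits)
  qed
qed

function (sequential) sem :: "('e,'v) proc \<Rightarrow> 'e list set" where
  "sem STOP = {[]}"
| "sem FAIL = {}"
| "sem (Prefix x E P) = {[]} \<union> (\<Union>e\<in>den E. tprefix e (sem (subst x e P)))"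
| "sem (Ext P Q) = sem P \<union> sem Q"
| "sem (Par P E Q) = tpar (den E) (sem P) (sem Q)"
  by pat_completeness auto
termination by (relation "measure size") auto

datatype 'e act = Tau | Evt 'e

definition act_notin :: "'e act \<Rightarrow> 'e set \<Rightarrow> bool" where
  "act_notin a E = (case a of Tau \<Rightarrow> True | Evt e \<Rightarrow> e \<notin> E)"

inductive doomed :: "('e,'v) proc \<Rightarrow> bool" where
  "doomed FAIL"
| "doomed D1 \<Longrightarrow> doomed D2 \<Longrightarrow> doomed (Ext D1 D2)"
| "doomed D \<Longrightarrow> doomed (Par D E P)"
| "doomed D \<Longrightarrow> doomed (Par P E D)"

abbreviation viable :: "('e,'v) proc \<Rightarrow> bool" where
  "viable P \<equiv> \<not> doomed P"

inductive step :: "('e,'v) proc \<Rightarrow> 'e act \<Rightarrow> ('e,'v) proc \<Rightarrow> bool" where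
  r1: "e \<in> den E \<Longrightarrow> step (Prefix x E P) (Evt e) (subst x e P)"
| r2: "step P Tau P' \<Longrightarrow> step (Ext P Q) Tau (Ext P' Q)"
| r3: "step Q Tau Q' \<Longrightarrow> step (Ext P Q) Tau (Ext P Q')"
| r4: "step P (Evt e) P' \<Longrightarrow> step (Ext P Q) (Evt e) P'"
| r5: "step Q (Evt e) Q' \<Longrightarrow> step (Ext P Q) (Evt e) Q'"
| r6: "step P a P' \<Longrightarrow> act_notin a (den E) \<Longrightarrow> viable Q \<Longrightarrow> step (Par P E Q) a (Par P' E Q)"
| r7: "step Q a Q' \<Longrightarrow> act_notin a (den E) \<Longrightarrow> viable P \<Longrightarrow> step (Par P E Q) a (Par P E Q')"
| r8: "viable P \<Longrightarrow> viable Q \<Longrightarrow> step P (Evt e) P' \<Longrightarrow> step Q (Evt e) Q' \<Longrightarrow> e \<in> den E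
       \<Longrightarrow> step (Par P E Q) (Evt e) (Par P' E Q')"
| r9: "doomed D1 \<Longrightarrow> doomed D2 \<Longrightarrow> step D1 Tau P1 \<Longrightarrow> step (Par D1 E D2) Tau (Par P1 E D2)"
| r10: "doomed D1 \<Longrightarrow> doomed D2 \<Longrightarrow> step D2 Tau P2 \<Longrightarrow> step (Par D1 E D2) Tau (Par D1 E P2)"
| r11: "step (Ext FAIL FAIL) Tau FAIL"
| r12: "step (Par FAIL E P) Tau FAIL"
| r13: "step (Par P E FAIL) Tau FAIL"

inductive weak :: "('e,'v) proc \<Rightarrow> 'e list \<Rightarrow> ('e,'v) proc \<Rightarrow> bool" where
  w_refl: "weak P [] P"
| w_tau: "step P Tau P' \<Longrightarrow> weak P' s Q \<Longrightarrow> weak P s Q"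
| w_evt: "step P (Evt e) P' \<Longrightarrow> weak P' s Q \<Longrightarrow> weak P (e # s) Q"

end

theory Submission
  imports Defs
begin

lemma tpar_mem_ne: "tpar_mem E T1 T2 t \<Longrightarrow> T1 \<noteq> {} \<and> T2 \<noteq> {}"
  by (cases t) auto

lemma tpar_mem_mono:
  "tpar_mem E T1 T2 t \<Longrightarrow> T1 \<subseteq> U1 \<Longrightarrow> T2 \<subseteq> U2 \<Longrightarrow> tpar_mem E U1 U2 t"
proof (induction t arbitrary: T1 T2 U1 U2)
  case Nil then show ?case by auto
next
  case (Cons e t)
  have a1: "after T1 e \<subseteq> after U1 e" "after T2 e \<subseteq> after U2 e"
    using Cons.prems by (auto simp: after_def)
  show ?case using Cons.prems Cons.IH[OF _ a1] Cons.IH[OF _ a1(1) Cons.prems(3)]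
      Cons.IH[OF _ Cons.prems(2) a1(2)]
    by (auto split: if_splits)
qed

lemma tpar_mem_wit:
  "tpar_mem E T1 T2 t \<Longrightarrow> \<exists>t1\<in>T1. \<exists>t2\<in>T2. \<forall>U1 U2. t1 \<in> U1 \<longrightarrow> t2 \<in> U2 \<longrightarrow> tpar_mem E U1 U2 t"
proof (induction t arbitrary: T1 T2)
  case Nil then show ?case by auto
next
  case (Cons e t)
  show ?case
  proof (cases "e \<in> E")
    case True
    then have "tpar_mem E (after T1 e) (after T2 e) t" using Cons.prems by simp
    from Cons.IH[OF this] obtain t1 t2 where w: "t1 \<in> after T1 e" "t2 \<in> after T2 e"
      "\<forall>U1 U2. t1 \<in> U1 \<longrightarrow> t2 \<in> U2 \<longrightarrow> tpar_mem E U1 U2 t" by blast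
    show ?thesis
      apply (rule bexI[of _ "e # t1"], rule bexI[of _ "e # t2"])
      using w True by (auto simp: after_def)
  next
    case False
    then have "tpar_mem E (after T1 e) T2 t \<or> tpar_mem E T1 (after T2 e) t" using Cons.prems by simp
    then show ?thesis
    proof
      assume "tpar_mem E (after T1 e) T2 t"
      from Cons.IH[OF this] obtain t1 t2 where w: "t1 \<in> after T1 e" "t2 \<in> T2"
        "\<forall>U1 U2. t1 \<in> U1 \<longrightarrow> t2 \<in> U2 \<longrightarrow> tpar_mem E U1 U2 t" by blast
      show ?thesis
        apply (rule bexI[of _ "e # t1"], rule bexI[of _ "t2"])
        using w False by (auto simp: after_def)
    next
      assume "tpar_mem E T1 (after T2 e) t"
      from Cons.IH[OF this] obtain t1 t2 where w: "t1 \<in> T1" "t2 \<in> after T2 e"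
        "\<forall>U1 U2. t1 \<in> U1 \<longrightarrow> t2 \<in> U2 \<longrightarrow> tpar_mem E U1 U2 t" by blast
      show ?thesis
        apply (rule bexI[of _ "t1"], rule bexI[of _ "e # t2"])
        using w False by (auto simp: after_def)
    qed
  qed
qed

lemma doomed_sem: "doomed P \<Longrightarrow> sem P = {}"
  by (induction rule: doomed.induct) (auto simp: tpar_empty)

lemma step_sound:
  "step P a P' \<Longrightarrow> (a = Tau \<longrightarrow> sem P' = sem P) \<and> (\<forall>e. a = Evt e \<longrightarrow> sem P' \<subseteq> after (sem P) e)"
proof (induction rule: step.induct)
  case (r1 e E x P)
  then show ?case by (auto simp: after_def tprefix_def)
next
  case (r6 P a P' E Q)
  show ?case
  proof (intro conjI allI impI)
    assume "a = Tau" then show "sem (Par P' E Q) = sem (Par P E Q)" using r6 by simp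
  next
    fix e assume ae: "a = Evt e"
    show "sem (Par P' E Q) \<subseteq> after (sem (Par P E Q)) e"
    proof
      fix t assume "t \<in> sem (Par P' E Q)"
      then have m: "tpar_mem (den E) (sem P') (sem Q) t" by (simp add: tpar_def)
      have sub: "sem P' \<subseteq> after (sem P) e" using r6 ae by simp
      have "sem P \<noteq> {}" using tpar_mem_ne[OF m] sub by (auto simp: after_def)
      moreover have "e \<notin> den E" using r6.hyps(2) ae by (simp add: act_notin_def)
      ultimately show "t \<in> after (sem (Par P E Q)) e"
        using tpar_mem_ne[OF m] tpar_mem_mono[OF m sub order_refl]
        by (simp add: after_def tpar_def)
    qed
  qed
next
  case (r7 Q a Q' E P)
  show ?case
  proof (intro conjI allI impI)
    assume "a = Tau" then show "sem (Par P E Q') = sem (Par P E Q)" using r7 by simp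
  next
    fix e assume ae: "a = Evt e"
    show "sem (Par P E Q') \<subseteq> after (sem (Par P E Q)) e"
    proof
      fix t assume "t \<in> sem (Par P E Q')"
      then have m: "tpar_mem (den E) (sem P) (sem Q') t" by (simp add: tpar_def)
      have sub: "sem Q' \<subseteq> after (sem Q) e" using r7 ae by simp
      have "sem Q \<noteq> {}" using tpar_mem_ne[OF m] sub by (auto simp: after_def)
      moreover have "e \<notin> den E" using r7.hyps(2) ae by (simp add: act_notin_def)
      ultimately show "t \<in> after (sem (Par P E Q)) e"
        using tpar_mem_ne[OF m] tpar_mem_mono[OF m order_refl sub]
        by (simp add: after_def tpar_def)
    qed
  qed
next
  case (r8 P Q e P' Q' E)
  show ?case
  proof (intro conjI allI impI)
    fix e' assume ae: "Evt e = Evt e'"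
    show "sem (Par P' E Q') \<subseteq> after (sem (Par P E Q)) e'"
    proof
      fix t assume "t \<in> sem (Par P' E Q')"
      then have m: "tpar_mem (den E) (sem P') (sem Q') t" by (simp add: tpar_def)
      have sub: "sem P' \<subseteq> after (sem P) e" "sem Q' \<subseteq> after (sem Q) e" using r8 by auto
      have "sem P \<noteq> {}" "sem Q \<noteq> {}" using tpar_mem_ne[OF m] sub by (auto simp: after_def)
      then show "t \<in> after (sem (Par P E Q)) e'"
        using ae r8.hyps(5) tpar_mem_mono[OF m sub]
        by (simp add: after_def tpar_def)
    qed
  qed simp
next
  case (r12 E P) then show ?case by (simp add: tpar_empty)
next
  case (r13 P E) then show ?case by (simp add: tpar_empty)
qed (auto simp: after_def)

lemma weak_sound:
  "weak P s Q \<Longrightarrow> (s = [] \<longrightarrow> sem Q = sem P) \<and> (\<forall>e. s = [e] \<longrightarrow> sem Q \<subseteq> after (sem P) e)"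
proof (induction rule: weak.induct)
  case (w_tau P P' s Q) then show ?case using step_sound[OF w_tau.hyps(1)] by auto
next
  case (w_evt P e P' s Q) then show ?case using step_sound[OF w_evt.hyps(1)] by auto
qed simp

lemma weak_cons_dec:
  "weak P s Q \<Longrightarrow> s = e # r \<Longrightarrow> \<exists>A B. weak P [] A \<and> step A (Evt e) B \<and> weak B r Q"
proof (induction rule: weak.induct)
  case (w_tau P P' s Q)
  then obtain A B where "weak P' [] A" "step A (Evt e) B" "weak B r Q" by blast
  then show ?case using w_tau.hyps(1) weak.w_tau by blast
next
  case (w_evt P e' P' s Q)
  then show ?case using weak.w_refl by blast
qed simp

lemma weak_trans: "weak P s Q \<Longrightarrow> weak Q r R \<Longrightarrow> weak P (s @ r) R"
  by (induction rule: weak.induct) (auto intro: weak.intros)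

lemma weak_ext: "weak P s Q \<Longrightarrow> s = [] \<Longrightarrow> weak (Ext P R) [] (Ext Q R)"
  by (induction rule: weak.induct) (auto intro: weak.intros step.intros)

lemma weak_par1: "weak P s Q \<Longrightarrow> s = [] \<Longrightarrow> viable R \<Longrightarrow> weak (Par P E R) [] (Par Q E R)"
proof (induction rule: weak.induct)
  case (w_tau P P' s Q)
  have "step (Par P E R) Tau (Par P' E R)" using step.r6[OF w_tau.hyps(1) _ w_tau.prems(2)] by (simp add: act_notin_def)
  then show ?case using w_tau weak.w_tau by blast
qed (auto intro: weak.intros)

lemma weak_par2: "weak P s Q \<Longrightarrow> s = [] \<Longrightarrow> viable R \<Longrightarrow> weak (Par R E P) [] (Par R E Q)"
proof (induction rule: weak.induct)
  case (w_tau P P' s Q)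
  have "step (Par R E P) Tau (Par R E P')" using step.r7[OF w_tau.hyps(1) _ w_tau.prems(2)] by (simp add: act_notin_def)
  then show ?case using w_tau weak.w_tau by blast
qed (auto intro: weak.intros)

lemma viable_of: "x \<in> sem P \<Longrightarrow> viable P"
  using doomed_sem by blast

lemma complete:
  "e # t \<in> sem P \<Longrightarrow> \<exists>Q. weak P [e] Q \<and> t \<in> sem Q"
proof (induction P arbitrary: e t rule: sem.induct)
  case 1 then show ?case by simp
next
  case 2 then show ?case by simp
next
  case (3 x E P)
  then have "e \<in> den E" "t \<in> sem (subst x e P)" by (auto simp: tprefix_def split: if_splits)
  then show ?case by (blast intro: step.r1 weak.w_evt weak.w_refl)
next
  case (4 P1 P2)
  show ?case
  proof (cases "e # t \<in> sem P1")
    case True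
    from "4.IH"(1)[OF True] obtain Q where q: "weak P1 [e] Q" "t \<in> sem Q" by blast
    from weak_cons_dec[OF q(1)] obtain A B where ab: "weak P1 [] A" "step A (Evt e) B" "weak B [] Q" by blast
    have "weak (Ext P1 P2) [] (Ext A P2)" using weak_ext[OF ab(1)] by simp
    moreover have "weak (Ext A P2) [e] Q" using ab(2,3) by (blast intro: step.r4 weak.w_evt)
    ultimately show ?thesis using q(2) weak_trans by fastforce
  next
    case False
    then have T: "e # t \<in> sem P2" using "4.prems" by simp
    from "4.IH"(2)[OF T] obtain Q where q: "weak P2 [e] Q" "t \<in> sem Q" by blast
    from weak_cons_dec[OF q(1)] obtain A B where ab: "weak P2 [] A" "step A (Evt e) B" "weak B [] Q" by blast
    have "weak (Ext P1 P2) [] (Ext P1 A)"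
      using ab(1) by (induction "[]::'a list" A rule: weak.induct) (auto intro: weak.intros step.intros)
    moreover have "weak (Ext P1 A) [e] Q" using ab(2,3) by (blast intro: step.r5 weak.w_evt)
    ultimately show ?thesis using q(2) weak_trans by fastforce
  qed
next
  case (5 P1 E P2)
  from "5.prems" have m: "tpar_mem (den E) (sem P1) (sem P2) (e # t)" by (simp add: tpar_def)
  have ne: "sem P1 \<noteq> {}" "sem P2 \<noteq> {}" using m by auto
  have v1: "viable P1" and v2: "viable P2" using ne viable_of by blast+
  show ?case
  proof (cases "e \<in> den E")
    case True
    then have "tpar_mem (den E) (after (sem P1) e) (after (sem P2) e) t" using m by simp
    from tpar_mem_wit[OF this] obtain t1 t2 where w: "t1 \<in> after (sem P1) e" "t2 \<in> after (sem P2) e"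
      "\<forall>U1 U2. t1 \<in> U1 \<longrightarrow> t2 \<in> U2 \<longrightarrow> tpar_mem (den E) U1 U2 t" by blast
    from "5.IH"(1)[of e t1] w(1) obtain Q1 where q1: "weak P1 [e] Q1" "t1 \<in> sem Q1" by (auto simp: after_def)
    from "5.IH"(2)[of e t2] w(2) obtain Q2 where q2: "weak P2 [e] Q2" "t2 \<in> sem Q2" by (auto simp: after_def)
    from weak_cons_dec[OF q1(1)] obtain A1 B1 where ab1: "weak P1 [] A1" "step A1 (Evt e) B1" "weak B1 [] Q1" by blast
    from weak_cons_dec[OF q2(1)] obtain A2 B2 where ab2: "weak P2 [] A2" "step A2 (Evt e) B2" "weak B2 [] Q2" by blast
    have sA1: "sem A1 = sem P1" using weak_sound[OF ab1(1)] by simp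
    have sA2: "sem A2 = sem P2" using weak_sound[OF ab2(1)] by simp
    have sB1: "sem B1 = sem Q1" using weak_sound[OF ab1(3)] by simp
    have sB2: "sem B2 = sem Q2" using weak_sound[OF ab2(3)] by simp
    have vA1: "viable A1" and vA2: "viable A2" using sA1 sA2 ne viable_of by blast+
    have vB1: "viable B1" using sB1 q1(2) viable_of by blast
    have vQ2: "viable Q2" using q2(2) viable_of by blast
    have "weak (Par P1 E P2) [] (Par A1 E P2)" using weak_par1[OF ab1(1) refl v2] .
    moreover have "weak (Par A1 E P2) [] (Par A1 E A2)" using weak_par2[OF ab2(1) refl vA1] .
    moreover have "weak (Par A1 E A2) [e] (Par B1 E B2)"
      by (rule weak.w_evt[OF step.r8[OF vA1 vA2 ab1(2) ab2(2) True] weak.w_refl])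
    moreover have "weak (Par B1 E B2) [] (Par B1 E Q2)" using weak_par2[OF ab2(3) refl vB1] .
    moreover have "weak (Par B1 E Q2) [] (Par Q1 E Q2)" using weak_par1[OF ab1(3) refl vQ2] .
    ultimately have "weak (Par P1 E P2) [e] (Par Q1 E Q2)"
      using weak_trans by (metis append_Nil append_Nil2)
    moreover have "t \<in> sem (Par Q1 E Q2)" using w(3) q1(2) q2(2) by (simp add: tpar_def)
    ultimately show ?thesis by blast
  next
    case False
    then have "tpar_mem (den E) (after (sem P1) e) (sem P2) t \<or> tpar_mem (den E) (sem P1) (after (sem P2) e) t"
      using m by simp
    then show ?thesis
    proof
      assume mm: "tpar_mem (den E) (after (sem P1) e) (sem P2) t"
      from tpar_mem_wit[OF mm] obtain t1 t2 where w: "t1 \<in> after (sem P1) e" "t2 \<in> sem P2"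
        "\<forall>U1 U2. t1 \<in> U1 \<longrightarrow> t2 \<in> U2 \<longrightarrow> tpar_mem (den E) U1 U2 t" by blast
      from "5.IH"(1)[of e t1] w(1) obtain Q1 where q1: "weak P1 [e] Q1" "t1 \<in> sem Q1" by (auto simp: after_def)
      from weak_cons_dec[OF q1(1)] obtain A1 B1 where ab1: "weak P1 [] A1" "step A1 (Evt e) B1" "weak B1 [] Q1" by blast
      have "weak (Par P1 E P2) [] (Par A1 E P2)" using weak_par1[OF ab1(1) refl v2] .
      moreover have "weak (Par A1 E P2) [e] (Par B1 E P2)"
        by (rule weak.w_evt[OF step.r6[OF ab1(2) _ v2] weak.w_refl]) (simp add: act_notin_def False)
      moreover have "weak (Par B1 E P2) [] (Par Q1 E P2)" using weak_par1[OF ab1(3) refl v2] .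
      ultimately have "weak (Par P1 E P2) [e] (Par Q1 E P2)"
        using weak_trans by (metis append_Nil append_Nil2)
      moreover have "t \<in> sem (Par Q1 E P2)" using w(2,3) q1(2) by (simp add: tpar_def)
      ultimately show ?thesis by blast
    next
      assume mm: "tpar_mem (den E) (sem P1) (after (sem P2) e) t"
      from tpar_mem_wit[OF mm] obtain t1 t2 where w: "t1 \<in> sem P1" "t2 \<in> after (sem P2) e"
        "\<forall>U1 U2. t1 \<in> U1 \<longrightarrow> t2 \<in> U2 \<longrightarrow> tpar_mem (den E) U1 U2 t" by blast
      from "5.IH"(2)[of e t2] w(2) obtain Q2 where q2: "weak P2 [e] Q2" "t2 \<in> sem Q2" by (auto simp: after_def)
      from weak_cons_dec[OF q2(1)] obtain A2 B2 where ab2: "weak P2 [] A2" "step A2 (Evt e) B2" "weak B2 [] Q2" by blast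
      have "weak (Par P1 E P2) [] (Par P1 E A2)" using weak_par2[OF ab2(1) refl v1] .
      moreover have "weak (Par P1 E A2) [e] (Par P1 E B2)"
        by (rule weak.w_evt[OF step.r7[OF ab2(2) _ v1] weak.w_refl]) (simp add: act_notin_def False)
      moreover have "weak (Par P1 E B2) [] (Par P1 E Q2)" using weak_par2[OF ab2(3) refl v1] .
      ultimately have "weak (Par P1 E P2) [e] (Par P1 E Q2)"
        using weak_trans by (metis append_Nil append_Nil2)
      moreover have "t \<in> sem (Par P1 E Q2)" using w(1,3) q2(2) by (simp add: tpar_def)
      ultimately show ?thesis by blast
    qed
  qed
qed

theorem lemma2:
  fixes P :: "('e,'v) proc" and e :: 'e
  assumes "closed P"
  shows "after (sem P) e = (\<Union>Q\<in>{Q. weak P [e] Q}. sem Q)"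
proof
  show "after (sem P) e \<subseteq> (\<Union>Q\<in>{Q. weak P [e] Q}. sem Q)"
    using complete by (fastforce simp: after_def)
  show "(\<Union>Q\<in>{Q. weak P [e] Q}. sem Q) \<subseteq> after (sem P) e"
    using weak_sound by blast
qed

end
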